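(* Let $F\subsetneq K$ be fields of characteristic $0$, with $F$ a proper nonempty subfield of $K$. Let $p(x)=\sum_{k=0}^{n}a_k x^k\in K[x]$ be non-constant with $0\neq a_n\in F$. Let $q\in K[x,y]\setminus F[x,y]$, written $q(x,y)=\sum_{j=0}^{m}q_j(x,y)$ with each $q_j$ homogeneous of degree $j$ and $0\neq q_m\in F[x,y]$. If $q_j\notin F[x,y]$ for some $j\geq 1$, then $p(q(x,y))\notin F[x,y]$ and $D_F(p\circ q)=D_F(q)$.
   Context: $F[x,y]$ denotes polynomials in $x,y$ with all coefficients in $F$. For $h\in K[x,y]$ written $h=\sum_{k=0}^{N}h_k$ with $h_k$ homogeneous of degree $k$ and $h_N\neq 0$: if $h\notin F[x,y]$, $D_F(h)=N-\max\{k: h_k\notin F[x,y]\}$; if $h\in F[x,y]$, $D_F(h)=N$. *)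

theory Defs
  imports "HOL-Computational_Algebra.Polynomial"
begin

text \<open>Bivariate polynomials K[x,y] are represented as 'a poly poly:
 polynomials in y whose coefficients are polynomials in x.
 The coefficient of x^i y^j of h is bcoeff h i j.\<close>

definition bcoeff :: "'a::zero poly poly \<Rightarrow> nat \<Rightarrow> nat \<Rightarrow> 'a" where
  "bcoeff h i j = coeff (coeff h j) i"

definition is_subfield :: "'a::field set \<Rightarrow> bool" where
  "is_subfield F \<longleftrightarrow> 0 \<in> F \<and> 1 \<in> F \<and>
     (\<forall>a\<in>F. \<forall>b\<in>F. a + b \<in> F \<and> a - b \<in> F \<and> a * b \<in> F) \<and>
     (\<forall>a\<in>F. inverse a \<in> F)"

definition in_Fxy :: "'a::zero set \<Rightarrow> 'a poly poly \<Rightarrow> bool" where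
  "in_Fxy F h \<longleftrightarrow> (\<forall>i j. bcoeff h i j \<in> F)"

definition hom_in_Fxy :: "'a::zero set \<Rightarrow> 'a poly poly \<Rightarrow> nat \<Rightarrow> bool" where
  "hom_in_Fxy F h k \<longleftrightarrow> (\<forall>i j. i + j = k \<longrightarrow> bcoeff h i j \<in> F)"

text \<open>total degree N (for h \<noteq> 0)\<close>
definition tdeg :: "'a::zero poly poly \<Rightarrow> nat" where
  "tdeg h = Max {i + j | i j. bcoeff h i j \<noteq> 0}"

definition D_F :: "'a::zero set \<Rightarrow> 'a poly poly \<Rightarrow> nat" where
  "D_F F h = (if in_Fxy F h then tdeg h
              else tdeg h - Max {k. \<not> hom_in_Fxy F h k})"

definition comp_biv :: "'a::comm_semiring_1 poly \<Rightarrow> 'a poly poly \<Rightarrow> 'a poly poly" where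
  "comp_biv p q = poly (map_poly (\<lambda>c. [:[:c:]:]) p) q"

end

theory Submission
  imports Defs
begin


definition subr :: "'r::comm_ring_1 set \<Rightarrow> bool" where
  "subr S \<longleftrightarrow> 0 \<in> S \<and> 1 \<in> S \<and> (\<forall>a\<in>S. \<forall>b\<in>S. a + b \<in> S \<and> a - b \<in> S \<and> a * b \<in> S)"

definition dprop :: "'r::comm_ring_1 set \<Rightarrow> bool" where
  "dprop S \<longleftrightarrow> (\<forall>s\<in>S. \<forall>r. s \<noteq> 0 \<longrightarrow> s * r \<in> S \<longrightarrow> r \<in> S)"

definition polyS :: "'r::zero set \<Rightarrow> 'r poly set" where
  "polyS S = {p. \<forall>i. coeff p i \<in> S}"

lemma subr_sum: assumes "subr S" "finite A" "\<And>x. x \<in> A \<Longrightarrow> f x \<in> S" shows "sum f A \<in> S"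
  using assms(2,3) by (induction A rule: finite_induct) (use assms(1) in \<open>auto simp: subr_def\<close>)

lemma subr_of_nat: "subr S \<Longrightarrow> of_nat n \<in> S"
  by (induction n) (auto simp: subr_def)

lemma subr_polyS: assumes "subr S" shows "subr (polyS S)"
proof -
  have m: "p * q \<in> polyS S" if "p \<in> polyS S" "q \<in> polyS S" for p q
    unfolding polyS_def mem_Collect_eq coeff_mult using that assms
    by (intro allI subr_sum) (auto simp: polyS_def subr_def)
  show ?thesis using assms m unfolding subr_def polyS_def
    by (auto simp: coeff_1)
qed

lemma polyS_monom: "0 \<in> S \<Longrightarrow> b \<in> S \<Longrightarrow> monom b d \<in> polyS S"
  by (auto simp: polyS_def coeff_monom)

lemma dprop_polyS:
  fixes S :: "'r::idom set"
  assumes "subr S" "dprop S"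
  shows "dprop (polyS S)"
  unfolding dprop_def
proof (intro ballI allI impI)
  fix A B :: "'r poly"
  assume A: "A \<in> polyS S" "A \<noteq> 0" and AB: "A * B \<in> polyS S"
  have PS: "subr (polyS S)" using subr_polyS[OF assms(1)] .
  show "B \<in> polyS S" using AB
  proof (induction "degree B" arbitrary: B rule: less_induct)
    case less
    show ?case
    proof (cases "B = 0")
      case True then show ?thesis using assms(1) by (simp add: polyS_def subr_def)
    next
      case False
      define b where "b = lead_coeff B"
      define d where "d = degree B"
      have "coeff (A * B) (degree A + degree B) = lead_coeff A * b"
        by (simp add: coeff_mult_degree_sum b_def)
      moreover have "coeff (A * B) (degree A + degree B) \<in> S" using less.prems by (simp add: polyS_def)
      moreover have "lead_coeff A \<in> S" "lead_coeff A \<noteq> 0" using A by (auto simp: polyS_def)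
      ultimately have bS: "b \<in> S" using assms(2) unfolding dprop_def by metis
      have mS: "monom b d \<in> polyS S" using bS assms(1) by (simp add: polyS_monom subr_def)
      show ?thesis
      proof (cases "d = 0")
        case True
        then have "B = monom b d" unfolding b_def d_def
          by (intro poly_eqI) (auto simp: coeff_monom coeff_eq_0)
        then show ?thesis using mS by simp
      next
        case False
        define B' where "B' = B - monom b d"
        have "\<forall>i>d - 1. coeff B' i = 0"
          using False by (auto simp: B'_def coeff_monom b_def d_def coeff_eq_0)
        then have "degree B' \<le> d - 1" by (rule degree_le)
        then have dl: "degree B' < degree B" using False d_def by linarith
        have "A * B' = A * B - A * monom b d" by (simp add: B'_def algebra_simps)
        moreover have "A * monom b d \<in> polyS S" using PS A mS unfolding subr_def by blast
        ultimately have "A * B' \<in> polyS S" using PS less.prems unfolding subr_def by metis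
        then have "B' \<in> polyS S" using less.hyps dl by blast
        then have "B' + monom b d \<in> polyS S" using PS mS unfolding subr_def by blast
        then show ?thesis by (simp add: B'_def)
      qed
    qed
  qed
qed

lemma subfield_subr: "is_subfield (F :: 'a::field set) \<Longrightarrow> subr F"
  by (simp add: is_subfield_def subr_def)

lemma subfield_dprop: assumes "is_subfield (F :: 'a::field set)" shows "dprop F"
  unfolding dprop_def
proof (intro ballI allI impI)
  fix s r assume "s \<in> F" "s \<noteq> 0" "s * r \<in> F"
  then have "inverse s * (s * r) \<in> F" using assms by (simp add: is_subfield_def)
  then show "r \<in> F" using \<open>s \<noteq> 0\<close> by (simp add: field_simps)
qed



lemma coeff_mult_bound:
  fixes p q :: "'r::comm_semiring_0 poly"
  assumes "degree p \<le> a" "degree q \<le> b"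
  shows "coeff (p * q) (a + b) = coeff p a * coeff q b"
proof (cases "degree p = a \<and> degree q = b")
  case True then show ?thesis using coeff_mult_degree_sum by metis
next
  case False
  then have "degree (p * q) < a + b" using assms degree_mult_le[of p q] by linarith
  moreover have "coeff p a * coeff q b = 0" using False assms
    by (metis coeff_eq_0 le_neq_implies_less mult_zero_left mult_zero_right)
  ultimately show ?thesis by (simp add: coeff_eq_0)
qed

lemma main_abstract:
  fixes S :: "'r::{idom,ring_char_0} set" and Q :: "'r poly" and a :: "nat \<Rightarrow> 'r"
  assumes sS: "subr S" and dS: "dprop S" and m: "m = degree Q" and lcS: "lead_coeff Q \<in> S"
    and rm: "r < m" and r1: "1 \<le> r" and crS: "coeff Q r \<notin> S" and above: "\<forall>k>r. coeff Q k \<in> S"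
    and n1: "n \<ge> 1" and anS: "a n \<in> S" and an0: "a n \<noteq> 0"
    and P: "P = (\<Sum>k\<le>n. smult (a k) (Q^k))"
  shows "coeff P ((n-1)*m + r) \<notin> S" "\<forall>d>(n-1)*m+r. coeff P d \<in> S" "degree P = n*m"
proof -
  have S0: "0 \<in> S" and Sadd: "\<And>x y. x \<in> S \<Longrightarrow> y \<in> S \<Longrightarrow> x + y \<in> S"
    and Sdiff: "\<And>x y. x \<in> S \<Longrightarrow> y \<in> S \<Longrightarrow> x - y \<in> S"
    and Smul: "\<And>x y. x \<in> S \<Longrightarrow> y \<in> S \<Longrightarrow> x * y \<in> S" using sS by (auto simp: subr_def)
  have PS: "subr (polyS S)" using subr_polyS[OF sS] .
  have Pmul: "\<And>x y. x \<in> polyS S \<Longrightarrow> y \<in> polyS S \<Longrightarrow> x * y \<in> polyS S"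
    and P1: "1 \<in> polyS S" using PS by (auto simp: subr_def)
  have Ppow: "x ^ k \<in> polyS S" if "x \<in> polyS S" for x k
    by (induction k) (use P1 Pmul that in auto)
  have Q0: "Q \<noteq> 0" using rm m by auto
  define lc where "lc = lead_coeff Q"
  have lc0: "lc \<noteq> 0" using Q0 lc_def by simp
  obtain n' where n': "n = Suc n'" using n1 by (cases n) auto
  define Qlo where "Qlo = (\<Sum>k\<le>r. monom (coeff Q k) k)"
  define Qh where "Qh = Q - Qlo"
  have cQlo: "coeff Qlo i = (if i \<le> r then coeff Q i else 0)" for i
    unfolding Qlo_def by (simp add: coeff_sum coeff_monom)
  have cQh: "coeff Qh i = (if i \<le> r then 0 else coeff Q i)" for i
    by (simp add: Qh_def cQlo)
  have dQlo: "degree Qlo \<le> r" by (rule degree_le) (simp add: cQlo)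
  have QhS: "Qh \<in> polyS S" using above S0 by (auto simp: polyS_def cQh)
  have dQh: "degree Qh = m"
  proof (rule antisym)
    show "degree Qh \<le> m" by (rule degree_le) (simp add: cQh m coeff_eq_0)
    show "m \<le> degree Qh" using rm lc0 by (intro le_degree) (simp add: cQh lc_def m)
  qed
  have lQh: "lead_coeff Qh = lc" using dQh rm by (simp add: cQh lc_def m)
  have Qh0: "Qh \<noteq> 0" using lQh lc0 by auto
  define T where "T = (\<Sum>i<n. Qh^(n - Suc i) * Q^i)"
  have diff: "Q^n - Qh^n = Qlo * T" unfolding T_def power_diff_sumr2 by (simp add: Qh_def)
  have cT: "coeff T ((n-1)*m) = of_nat n * lc^(n-1)"
  proof -
    have "coeff (Qh^(n - Suc i) * Q^i) ((n-1)*m) = lc^(n-1)" if "i < n" for i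
    proof -
      have e: "n - 1 = (n - Suc i) + i" using that by linarith
      have "(n-1)*m = degree (Qh^(n - Suc i)) + degree (Q^i)"
      proof -
        have "(n-1)*m = (n - Suc i)*m + i*m" by (metis e add_mult_distrib)
        then show ?thesis using Q0 Qh0 by (simp add: degree_power_eq dQh m[symmetric])
      qed
      then show ?thesis using that
        by (simp add: coeff_mult_degree_sum lead_coeff_power lQh lc_def power_add[symmetric] e[symmetric])
    qed
    then show ?thesis unfolding T_def coeff_sum by simp
  qed
  have degTi: "degree (Qh^(n - Suc i) * Q^i) = (n-1)*m" if "i < n" for i
  proof -
    have e: "n - 1 = (n - Suc i) + i" using that by linarith
    have "(n-1)*m = (n - Suc i)*m + i*m" by (metis e add_mult_distrib)
    then show ?thesis using Q0 Qh0 by (simp add: degree_power_eq dQh m[symmetric] degree_mult_eq)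
  qed
  have dT: "degree T \<le> (n-1)*m"
    unfolding T_def by (rule degree_le) (auto simp: coeff_sum degTi coeff_eq_0)
  define E where "E = Qlo * T"
  have cE: "coeff E ((n-1)*m + r) = coeff Q r * (of_nat n * lc^(n-1))"
    using coeff_mult_bound[OF dQlo dT] cT by (simp add: E_def cQlo add.commute)
  have dE: "degree E \<le> (n-1)*m + r" unfolding E_def
    using degree_mult_le[of Qlo T] dQlo dT by linarith
  have Qn: "Q^n = Qh^n + E" using diff by (simp add: E_def algebra_simps)
  have cP: "coeff P d = a n * coeff (Q^n) d" if "d > (n-1)*m" for d
  proof -
    have "coeff (smult (a k) (Q^k)) d = 0" if "k < n" for k
    proof -
      have "k \<le> n - 1" using \<open>k < n\<close> by linarith
      then have "k * m \<le> (n-1)*m" by (rule mult_right_mono) simp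
      moreover have "degree (Q^k) = k * m" using Q0 by (simp add: degree_power_eq m)
      ultimately have "degree (Q^k) < d" using \<open>d > (n-1)*m\<close> by linarith
      then show ?thesis by (simp add: coeff_eq_0)
    qed
    then show ?thesis unfolding P coeff_sum n' by (auto simp: sum.atMost_Suc intro!: sum.neutral)
  qed
  have r0: "(n-1)*m < (n-1)*m + r" using r1 by simp
  have hi: "coeff P d \<in> S" if "d > (n-1)*m + r" for d
  proof -
    have "coeff P d = a n * coeff (Qh^n) d"
      using that dE cP[of d] r0 by (simp add: Qn coeff_eq_0)
    moreover have "coeff (Qh^n) d \<in> S" using Ppow[OF QhS] by (simp add: polyS_def)
    ultimately show ?thesis using anS Smul by simp
  qed
  then show "\<forall>d>(n-1)*m+r. coeff P d \<in> S" by blast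
  show "coeff P ((n-1)*m + r) \<notin> S"
  proof
    assume A: "coeff P ((n-1)*m + r) \<in> S"
    define d where "d = (n-1)*m + r"
    have "coeff P d = a n * coeff (Qh^n) d + (a n * of_nat n * lc^(n-1)) * coeff Q r"
      using cP[of d] r0 cE by (simp add: d_def Qn algebra_simps)
    moreover have "coeff (Qh^n) d \<in> S" using Ppow[OF QhS] by (simp add: polyS_def)
    ultimately have "(a n * of_nat n * lc^(n-1)) * coeff Q r \<in> S"
      using A Sdiff Smul anS d_def by (metis add_diff_cancel_left')
    moreover have "a n * of_nat n * lc^(n-1) \<in> S"
    proof -
      have "lc^k \<in> S" for k by (induction k) (use sS lcS lc_def Smul in \<open>auto simp: subr_def\<close>)
      then show ?thesis using Smul anS subr_of_nat[OF sS] by simp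
    qed
    moreover have "a n * of_nat n * lc^(n-1) \<noteq> 0" using an0 lc0 n1 by simp
    ultimately show False using dS crS unfolding dprop_def by blast
  qed
  show "degree P = n*m"
  proof (rule antisym)
    have nm: "(n-1)*m + r < n*m" using rm n' by simp
    show "degree P \<le> n*m"
    proof (rule degree_le, intro allI impI)
      fix d assume "n*m < d"
      then have "coeff (Q^n) d = 0" using Q0 by (simp add: coeff_eq_0 degree_power_eq m)
      then show "coeff P d = 0" using cP[of d] nm \<open>n*m < d\<close> by simp
    qed
    have "coeff (Qh^n) (n*m) = lc^n" using Qh0
      by (metis dQh degree_power_eq lQh lead_coeff_power mult.commute)
    moreover have "coeff E (n*m) = 0" using dE nm by (simp add: coeff_eq_0)
    ultimately have "coeff (Q^n) (n*m) = lc^n" unfolding Qn by simp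
    moreover have "(n-1)*m < n*m" using nm by linarith
    ultimately have "coeff P (n*m) = a n * lc^n" using cP[of "n*m"] by simp
    then have "coeff P (n*m) \<noteq> 0" using an0 lc0 by simp
    then show "n*m \<le> degree P" by (rule le_degree)
  qed
qed


lemma map_poly_add_hom:
  assumes "f 0 = 0" "\<And>x y. f (x + y) = f x + f y"
  shows "map_poly f (p + q) = map_poly f p + map_poly f q"
  by (intro poly_eqI) (simp add: coeff_map_poly assms)

lemma map_poly_mult_hom:
  fixes f :: "'a::comm_semiring_0 \<Rightarrow> 'b::comm_semiring_0"
  assumes "f 0 = 0" "\<And>x y. f (x + y) = f x + f y" "\<And>x y. f (x * y) = f x * f y"
  shows "map_poly f (p * q) = map_poly f p * map_poly f q"
proof (induction p)
  case 0 then show ?case by simp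
next
  case (pCons a p)
  have "map_poly f (pCons a p * q) = map_poly f (smult a q) + map_poly f (pCons 0 (p * q))"
    by (simp add: map_poly_add_hom[OF assms(1,2)])
  also have "\<dots> = smult (f a) (map_poly f q) + pCons 0 (map_poly f p * map_poly f q)"
    by (simp add: map_poly_smult assms map_poly_pCons pCons.IH)
  also have "\<dots> = map_poly f (pCons a p) * map_poly f q"
    by (simp add: map_poly_pCons assms)
  finally show ?case .
qed

definition Emb :: "'a::comm_ring_1 poly \<Rightarrow> 'a poly poly" where
  "Emb c = map_poly (\<lambda>a. [:a:]) c"

lemma Emb_0[simp]: "Emb 0 = 0" by (simp add: Emb_def)
lemma Emb_add: "Emb (x + y) = Emb x + Emb y"
  unfolding Emb_def by (rule map_poly_add_hom) auto
lemma Emb_mult: "Emb (x * y) = Emb x * Emb y"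
  unfolding Emb_def by (rule map_poly_mult_hom) auto
lemma coeff_Emb: "coeff (Emb c) k = [:coeff c k:]"
  by (simp add: Emb_def coeff_map_poly)

definition Phi :: "'a::comm_ring_1 poly poly \<Rightarrow> 'a poly poly" where
  "Phi h = poly (map_poly Emb h) [:0, [:0,1:]:]"

lemma Phi_add: "Phi (x + y) = Phi x + Phi y"
  unfolding Phi_def by (simp add: map_poly_add_hom Emb_add)
lemma Phi_mult: "Phi (x * y) = Phi x * Phi y"
  unfolding Phi_def by (simp add: map_poly_mult_hom Emb_add Emb_mult)
lemma Phi_const: "Phi [:[:c:]:] = [:[:c:]:]"
  unfolding Phi_def by (simp add: map_poly_pCons Emb_def)
lemma Phi_pCons: "Phi (pCons c h) = Emb c + [:0, [:0,1:]:] * Phi h"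
  unfolding Phi_def by (simp add: map_poly_pCons)

lemma coeff_Phi: "coeff (coeff (Phi h) k) j = (if j \<le> k then bcoeff h (k - j) j else 0)"
proof (induction h arbitrary: k j)
  case 0 then show ?case by (simp add: Phi_def bcoeff_def)
next
  case (pCons c h)
  show ?case
    by (cases k; cases j) (auto simp: Phi_pCons coeff_Emb bcoeff_def coeff_pCons pCons.IH Suc_diff_le
        split: nat.splits)
qed

lemma Phi_comp: "Phi (poly (map_poly (\<lambda>c. [:[:c:]:]) p) q) = poly (map_poly (\<lambda>c. [:[:c:]:]) p) (Phi q)"
proof (induction p)
  case 0 then show ?case by (simp add: Phi_def)
next
  case (pCons a p)
  then show ?case by (simp add: map_poly_pCons Phi_add Phi_mult Phi_const)
qed

lemma comp_sum: "poly (map_poly (\<lambda>c. [:[:c:]:]) p) (Q :: 'a::comm_ring_1 poly poly)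
   = (\<Sum>k\<le>degree p. smult [:coeff p k:] (Q^k))"
proof -
  have d: "degree (map_poly (\<lambda>c. [:[:c:]:]) p) = degree p" by (rule degree_map_poly) simp
  show ?thesis unfolding poly_altdef d by (simp add: coeff_map_poly)
qed



lemma in_Fxy_Phi: "0 \<in> F \<Longrightarrow> in_Fxy F h \<longleftrightarrow> Phi h \<in> polyS (polyS F)"
proof -
  assume F0: "0 \<in> F"
  have e: "bcoeff h i j = coeff (coeff (Phi h) (i + j)) j" for i j by (simp add: coeff_Phi)
  show ?thesis unfolding in_Fxy_def polyS_def mem_Collect_eq
  proof
    assume "\<forall>i j. bcoeff h i j \<in> F"
    then show "\<forall>k j. coeff (coeff (Phi h) k) j \<in> F" using F0 by (simp add: coeff_Phi)
  next
    assume "\<forall>k j. coeff (coeff (Phi h) k) j \<in> F"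
    then show "\<forall>i j. bcoeff h i j \<in> F" by (simp only: e) blast
  qed
qed

lemma hom_Phi: "0 \<in> F \<Longrightarrow> hom_in_Fxy F h k \<longleftrightarrow> coeff (Phi h) k \<in> polyS F"
proof -
  assume F0: "0 \<in> F"
  have e: "bcoeff h i j = coeff (coeff (Phi h) (i + j)) j" for i j by (simp add: coeff_Phi)
  show ?thesis unfolding hom_in_Fxy_def polyS_def mem_Collect_eq
  proof
    assume H: "\<forall>i j. i + j = k \<longrightarrow> bcoeff h i j \<in> F"
    show "\<forall>j. coeff (coeff (Phi h) k) j \<in> F"
    proof
      fix j show "coeff (coeff (Phi h) k) j \<in> F"
        using H[rule_format, of "k - j" j] F0 by (simp add: coeff_Phi)
    qed
  next
    assume "\<forall>j. coeff (coeff (Phi h) k) j \<in> F"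
    then show "\<forall>i j. i + j = k \<longrightarrow> bcoeff h i j \<in> F" by (simp only: e) blast
  qed
qed

lemma set_Phi: "{i + j | i j. bcoeff h i j \<noteq> 0} = {k. coeff (Phi h) k \<noteq> 0}"
proof (intro set_eqI iffI)
  fix k assume "k \<in> {i + j | i j. bcoeff h i j \<noteq> 0}"
  then obtain i j where "k = i + j" "bcoeff h i j \<noteq> 0" by auto
  then have "coeff (coeff (Phi h) k) j \<noteq> 0" by (simp add: coeff_Phi)
  then show "k \<in> {k. coeff (Phi h) k \<noteq> 0}" by auto
next
  fix k assume "k \<in> {k. coeff (Phi h) k \<noteq> 0}"
  then have "coeff (Phi h) k \<noteq> 0" by simp
  then have "coeff (coeff (Phi h) k) (degree (coeff (Phi h) k)) \<noteq> 0" by (rule leading_coeff_neq_0)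
  then obtain j where "coeff (coeff (Phi h) k) j \<noteq> 0" by blast
  then have "j \<le> k" "bcoeff h (k - j) j \<noteq> 0" by (auto simp: coeff_Phi split: if_splits)
  then show "k \<in> {i + j | i j. bcoeff h i j \<noteq> 0}"
    by (intro CollectI exI[of _ "k - j"] exI[of _ j]) simp
qed

lemma tdeg_Phi: "Phi h \<noteq> 0 \<Longrightarrow> tdeg h = degree (Phi h)"
  unfolding tdeg_def set_Phi
proof (rule Max_eqI)
  show "finite {k. coeff (Phi h) k \<noteq> 0}"
    by (rule finite_subset[of _ "{..degree (Phi h)}"]) (auto intro: le_degree)
qed (auto intro: le_degree)

lemma Phi_nz: "h \<noteq> 0 \<Longrightarrow> Phi h \<noteq> 0"
proof -
  assume "h \<noteq> 0"
  then have "coeff h (degree h) \<noteq> 0" by (rule leading_coeff_neq_0)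
  then have "coeff (coeff h (degree h)) (degree (coeff h (degree h))) \<noteq> 0" by (rule leading_coeff_neq_0)
  then obtain i j where "bcoeff h i j \<noteq> 0" unfolding bcoeff_def by blast
  then have "coeff (coeff (Phi h) (i + j)) j \<noteq> 0" by (simp add: coeff_Phi)
  then show ?thesis by auto
qed

theorem theorem24:
  fixes F :: "'a::field_char_0 set" and p :: "'a poly" and q :: "'a poly poly"
  assumes "is_subfield F" and "F \<noteq> UNIV"
    and "degree p > 0" and "lead_coeff p \<in> F"
    and "\<not> in_Fxy F q"
    and "hom_in_Fxy F q (tdeg q)"
    and "\<exists>j\<ge>1. \<not> hom_in_Fxy F q j"
  shows "\<not> in_Fxy F (comp_biv p q) \<and> D_F F (comp_biv p q) = D_F F q"
proof -
  define S where "S = polyS F"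
  have sF: "subr F" using assms(1) by (rule subfield_subr)
  have F0: "0 \<in> F" using sF by (simp add: subr_def)
  have sS: "subr S" unfolding S_def using sF by (rule subr_polyS)
  have dS: "dprop S" unfolding S_def using sF subfield_dprop[OF assms(1)] by (rule dprop_polyS)
  have S0: "0 \<in> S" using sS by (simp add: subr_def)
  define Q where "Q = Phi q"
  define m where "m = degree Q"
  have q0: "q \<noteq> 0" using assms(5) F0 by (auto simp: in_Fxy_def bcoeff_def)
  have Q0: "Q \<noteq> 0" using Phi_nz[OF q0] Q_def by simp
  have tq: "tdeg q = m" using tdeg_Phi Q0 by (simp add: Q_def m_def)
  have homq: "\<And>k. hom_in_Fxy F q k \<longleftrightarrow> coeff Q k \<in> S" using hom_Phi[OF F0] by (simp add: Q_def S_def)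
  define K where "K = {k. coeff Q k \<notin> S}"
  have Kq: "{k. \<not> hom_in_Fxy F q k} = K" using homq by (simp add: K_def)
  have Ksub: "K \<subseteq> {..m}"
  proof
    fix x assume "x \<in> K"
    then have "coeff Q x \<noteq> 0" using S0 K_def by auto
    then show "x \<in> {..m}" using le_degree m_def by auto
  qed
  have Kfin: "finite K" using Ksub finite_subset by blast
  have Kne: "K \<noteq> {}" using assms(5) in_Fxy_Phi[OF F0, of q] unfolding K_def Q_def S_def polyS_def by auto
  define r where "r = Max K"
  have rK: "r \<in> K" using Kfin Kne r_def by simp
  have lcS: "lead_coeff Q \<in> S" using assms(6) homq tq m_def by simp
  have r1: "1 \<le> r"
  proof -
    obtain j where j: "j \<ge> 1" "\<not> hom_in_Fxy F q j" using assms(7) by blast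
    then have "j \<in> K" using Kq by blast
    then have "j \<le> r" using Kfin r_def by simp
    then show ?thesis using j by simp
  qed
  have rle: "r \<le> m" using rK Ksub by auto
  have rm: "r < m" using rle rK lcS unfolding K_def m_def by (metis le_neq_implies_less mem_Collect_eq)
  have crS: "coeff Q r \<notin> S" using rK K_def by simp
  have above: "\<forall>k>r. coeff Q k \<in> S" using Kfin r_def K_def Max_ge by fastforce
  define n where "n = degree p"
  define a where "a = (\<lambda>k. [:coeff p k:])"
  have n1: "n \<ge> 1" using assms(3) n_def by simp
  have anS: "a n \<in> S" using assms(4) F0 by (simp add: a_def n_def S_def polyS_def coeff_pCons split: nat.splits)
  have an0: "a n \<noteq> 0" using assms(3) by (auto simp: a_def n_def)
  define P where "P = (\<Sum>k\<le>n. smult (a k) (Q^k))"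
  have PP: "Phi (comp_biv p q) = P"
    unfolding comp_biv_def Phi_comp comp_sum[of p "Phi q"] by (simp add: P_def a_def n_def Q_def)
  note R = main_abstract[OF sS dS m_def lcS rm r1 crS above n1 anS an0 P_def]
  have P0: "P \<noteq> 0" using R(3) n1 rm by auto
  have notin: "\<not> in_Fxy F (comp_biv p q)"
    using in_Fxy_Phi[OF F0] R(1) PP by (auto simp: S_def polyS_def)
  have homP: "\<And>k. hom_in_Fxy F (comp_biv p q) k \<longleftrightarrow> coeff P k \<in> S"
    using hom_Phi[OF F0] PP by (simp add: S_def)
  have MP: "Max {k. \<not> hom_in_Fxy F (comp_biv p q) k} = (n-1)*m + r"
    unfolding homP
  proof (rule Max_eqI)
    show "finite {k. coeff P k \<notin> S}"
      by (rule finite_subset[of _ "{..(n-1)*m + r}"]) (use R(2) in \<open>auto simp: not_le[symmetric]\<close>)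
  qed (use R(1,2) not_le in auto)
  have tP: "tdeg (comp_biv p q) = n * m" using tdeg_Phi[of "comp_biv p q"] PP P0 R(3) by simp
  have "D_F F (comp_biv p q) = n*m - ((n-1)*m + r)" using notin MP tP by (simp add: D_F_def)
  also have "\<dots> = m - r"
  proof -
    obtain n' where "n = Suc n'" using n1 by (cases n) auto
    then have "n*m = (n-1)*m + m" by simp
    then show ?thesis by simp
  qed
  also have "\<dots> = D_F F q" using assms(5) tq Kq r_def by (simp add: D_F_def)
  finally show ?thesis using notin by simp
qed


end
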